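(* Fix $\mathbf d=(d_1,\ldots,d_n)$ of positive integers, $|\mathbf d|=\sum d_i$. In the projective space $\mathbb{P}^{|\mathbf d|}$ with homogeneous coordinates $(\alpha,z)=((\alpha_{i,j})_{1\le i\le n,1\le j\le d_i},z)$, consider the system consisting of $h_1=\cdots=h_{|\mathbf d|-1}=0$ and $z^{|\mathbf d|}=\prod_{i,j}\alpha_{i,j}$, where $h_k$ is the coefficient of $t^k$ in $\tilde f(\mathbf x(t))$ for $\tilde f=\left(\prod_{i=1}^n(x_i+1)\right)-1$ and $x_i(t)=\left(\prod_{j=1}^{d_i}(\alpha_{i,j}t+1)\right)-1$. Then this system has exactly $|\mathbf d|!$ solutions, each of them simple (of multiplicity one).
   Context: This solution set is the fibre over the coefficient vector of $\tilde f$ of the projection from the incidence variety $\{(\alpha,z,\mathbf c): h_k(\mathbf c,\alpha)=0 \ (1\le k\le|\mathbf d|-1),\ z^{|\mathbf d|}=\prod\alpha_{i,j}\}$ to the space of coefficient vectors $\mathbf c$ of $f$. *)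

theory Defs
  imports "HOL-Analysis.Analysis" "HOL-Computational_Algebra.Polynomial"
begin

type_synonym hpoint = "((nat \<times> nat) \<Rightarrow> complex) \<times> complex"
  (* (alpha, z); alpha indexed by (i,j), 0-based: i < n, j < d i *)

definition idx :: "(nat \<Rightarrow> nat) \<Rightarrow> nat \<Rightarrow> (nat \<times> nat) set" where
  "idx d n = {(i,j). i < n \<and> j < d i}"

definition dsum :: "(nat \<Rightarrow> nat) \<Rightarrow> nat \<Rightarrow> nat" where
  "dsum d n = (\<Sum>i<n. d i)"

definition xt :: "(nat \<Rightarrow> nat) \<Rightarrow> ((nat \<times> nat) \<Rightarrow> complex) \<Rightarrow> nat \<Rightarrow> complex poly" where
  "xt d \<alpha> i = (\<Prod>j<d i. [:1, \<alpha> (i,j):]) - 1"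

definition ftilde_xt :: "(nat \<Rightarrow> nat) \<Rightarrow> nat \<Rightarrow> ((nat \<times> nat) \<Rightarrow> complex) \<Rightarrow> complex poly" where
  "ftilde_xt d n \<alpha> = (\<Prod>i<n. xt d \<alpha> i + 1) - 1"

definition hcoef :: "(nat \<Rightarrow> nat) \<Rightarrow> nat \<Rightarrow> nat \<Rightarrow> ((nat \<times> nat) \<Rightarrow> complex) \<Rightarrow> complex" where
  "hcoef d n k \<alpha> = coeff (ftilde_xt d n \<alpha>) k"

definition sys :: "(nat \<Rightarrow> nat) \<Rightarrow> nat \<Rightarrow> nat \<Rightarrow> hpoint \<Rightarrow> complex" where
  "sys d n k p =
     (if k < dsum d n then hcoef d n k (fst p)
      else snd p ^ dsum d n - (\<Prod>v\<in>idx d n. fst p v))"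

definition solutions :: "(nat \<Rightarrow> nat) \<Rightarrow> nat \<Rightarrow> hpoint set" where
  "solutions d n = {p. (\<forall>v. v \<notin> idx d n \<longrightarrow> fst p v = 0) \<and> p \<noteq> (\<lambda>_. 0, 0) \<and>
                       (\<forall>k\<in>{1..dsum d n}. sys d n k p = 0)}"

definition proj_equiv :: "(nat \<Rightarrow> nat) \<Rightarrow> nat \<Rightarrow> (hpoint \<times> hpoint) set" where
  "proj_equiv d n = {(p,q). p \<in> solutions d n \<and> q \<in> solutions d n \<and>
       (\<exists>c::complex. c \<noteq> 0 \<and> q = ((\<lambda>v. c * fst p v), c * snd p))}"

definition pd_alpha :: "(hpoint \<Rightarrow> complex) \<Rightarrow> hpoint \<Rightarrow> nat \<times> nat \<Rightarrow> complex" where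
  "pd_alpha F p v = deriv (\<lambda>s. F ((fst p)(v := s), snd p)) (fst p v)"

definition pd_z :: "(hpoint \<Rightarrow> complex) \<Rightarrow> hpoint \<Rightarrow> complex" where
  "pd_z F p = deriv (\<lambda>s. F (fst p, s)) (snd p)"

text \<open>A solution is simple (multiplicity one) iff the Jacobian matrix of the |d| homogeneous
  equations w.r.t. the |d|+1 homogeneous coordinates has full rank |d| there,
  i.e. its rows are linearly independent.\<close>
definition simple_solution :: "(nat \<Rightarrow> nat) \<Rightarrow> nat \<Rightarrow> hpoint \<Rightarrow> bool" where
  "simple_solution d n p \<longleftrightarrow>
     (\<forall>c :: nat \<Rightarrow> complex.
        ((\<forall>v\<in>idx d n. (\<Sum>k\<in>{1..dsum d n}. c k * pd_alpha (sys d n k) p v) = 0) \<and>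
         (\<Sum>k\<in>{1..dsum d n}. c k * pd_z (sys d n k) p) = 0)
        \<longrightarrow> (\<forall>k\<in>{1..dsum d n}. c k = 0))"

end

theory Submission
  imports Defs "HOL-Combinatorics.Permutations"
begin

definition Pa :: "(nat \<Rightarrow> nat) \<Rightarrow> nat \<Rightarrow> ((nat \<times> nat) \<Rightarrow> complex) \<Rightarrow> complex poly" where
  "Pa d n \<alpha> = (\<Prod>v\<in>idx d n. [:1, \<alpha> v:])"

lemma idx_Sigma: "idx d n = Sigma {..<n} (\<lambda>i. {..<d i})"
  unfolding idx_def by auto

lemma idx_finite: "finite (idx d n)"
  unfolding idx_Sigma by auto

lemma idx_card: "card (idx d n) = dsum d n"
  unfolding idx_Sigma dsum_def by simp

lemma ftilde_Pa: "ftilde_xt d n \<alpha> = Pa d n \<alpha> - 1"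
  unfolding ftilde_xt_def xt_def Pa_def idx_Sigma
  by (simp add: prod.Sigma)

lemma hcoef_Pa: "k \<ge> 1 \<Longrightarrow> hcoef d n k \<alpha> = coeff (Pa d n \<alpha>) k"
  unfolding hcoef_def ftilde_Pa by (simp add: coeff_1)

lemma prodlin_basic:
  fixes f :: "'b \<Rightarrow> complex"
  assumes "finite A"
  shows "degree (\<Prod>v\<in>A. [:1, f v:]) \<le> card A \<and> coeff (\<Prod>v\<in>A. [:1, f v:]) (card A) = prod f A
         \<and> coeff (\<Prod>v\<in>A. [:1, f v:]) 0 = 1"
  using assms
proof (induction A rule: finite_induct)
  case empty
  then show ?case by simp
next
  case (insert x F)
  let ?R = "(\<Prod>v\<in>F. [:1, f v:])"
  have e: "(\<Prod>v\<in>insert x F. [:1, f v:]) = [:1, f x:] * ?R" using insert by simp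
  have "degree ([:1, f x:] * ?R) \<le> degree [:1, f x:] + degree ?R" by (rule degree_mult_le)
  also have "\<dots> \<le> 1 + card F" using insert by simp
  finally have d: "degree ([:1, f x:] * ?R) \<le> card (insert x F)" using insert by simp
  have c: "coeff ([:1, f x:] * ?R) (Suc (card F)) = f x * coeff ?R (card F)"
    using insert coeff_eq_0[of ?R "Suc (card F)"] by (simp add: mult_pCons_left)
  have c0: "coeff ([:1, f x:] * ?R) 0 = 1" using insert by (simp add: mult_pCons_left)
  show ?case using e d c c0 insert by simp
qed

lemma coeff_lin_mult_Suc: "coeff ([:1, s:] * (R::complex poly)) (Suc j) = coeff R (Suc j) + s * coeff R j"
  by (simp add: mult_pCons_left)

lemma prodlin_scale:
  fixes f :: "'b \<Rightarrow> complex"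
  shows "coeff (\<Prod>v\<in>A. [:1, c * f v:]) k = c ^ k * coeff (\<Prod>v\<in>A. [:1, f v:]) k"
proof -
  have "(\<Prod>v\<in>A. [:1, c * f v:]) = pcompose (\<Prod>v\<in>A. [:1, f v:]) [:0, c:]"
    by (simp add: pcompose_prod pcompose_pCons algebra_simps)
  then show ?thesis by (simp add: coeff_pcompose_linear)
qed

lemma prodlin_root:
  fixes f :: "'b \<Rightarrow> complex"
  assumes "finite A"
  shows "poly (\<Prod>v\<in>A. [:1, f v:]) x = 0 \<longleftrightarrow> (\<exists>v\<in>A. 1 + f v * x = 0)"
  using assms by (simp add: poly_prod prod_zero_iff mult.commute)

definition Wn :: "nat \<Rightarrow> complex set" where
  "Wn N = {w. w ^ N = (-1) ^ (N+1)}"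

definition Qp :: "nat \<Rightarrow> complex poly" where
  "Qp N = 1 + monom 1 N"

lemma Wn_card: "N > 0 \<Longrightarrow> card (Wn N) = N"
  unfolding Wn_def by (rule card_nth_roots) auto

lemma Wn_finite: "N > 0 \<Longrightarrow> finite (Wn N)"
  using Wn_card[of N] card_ge_0_finite by force

lemma Wn_nz: "N > 0 \<Longrightarrow> w \<in> Wn N \<Longrightarrow> w \<noteq> 0"
  unfolding Wn_def by (auto simp: power_0_left)

lemma poly_Qp: "poly (Qp N) x = 1 + x ^ N"
  unfolding Qp_def by (simp add: poly_monom)

lemma coeff_Qp: "coeff (Qp N) k = (if k = 0 then 1 else 0) + (if k = N then 1 else 0)"
  unfolding Qp_def by (simp add: coeff_monom coeff_1)

lemma degree_Qp: "degree (Qp N) \<le> N"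
  unfolding Qp_def by (metis degree_add_le degree_monom_le le0 degree_1)

lemma Qp_root_iff:
  assumes "N > 0" "w \<noteq> 0"
  shows "poly (Qp N) (-1/w) = 0 \<longleftrightarrow> w \<in> Wn N"
proof -
  have "poly (Qp N) (-1/w) = 1 + (-1)^N / w^N"
    by (simp add: poly_Qp power_minus' power_divide)
  also have "\<dots> = 0 \<longleftrightarrow> w^N = - ((-1)^N)"
    using assms by (auto simp: field_simps add_eq_0_iff2)
  finally show ?thesis unfolding Wn_def by simp
qed

lemma S1char:
  fixes f :: "'b \<Rightarrow> complex"
  assumes fin: "finite A" and cA: "card A = N" and N: "N > 0"
  shows "(\<Prod>v\<in>A. [:1, f v:]) = Qp N \<longleftrightarrow> bij_betw f A (Wn N)"
proof
  let ?P = "(\<Prod>v\<in>A. [:1, f v:])"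
  assume PQ: "?P = Qp N"
  have "prod f A = coeff ?P N" using prodlin_basic[OF fin, of f] cA by simp
  also have "\<dots> = 1" using PQ N by (simp add: coeff_Qp)
  finally have nz: "\<And>v. v \<in> A \<Longrightarrow> f v \<noteq> 0" using fin by (metis prod_zero_iff zero_neq_one)
  have sub: "f ` A \<subseteq> Wn N"
  proof
    fix w assume "w \<in> f ` A"
    then obtain v where v: "v \<in> A" "w = f v" by auto
    have "poly ?P (-1/w) = 0" using v nz[OF v(1)] prodlin_root[OF fin, of f "-1/w"] by auto
    then show "w \<in> Wn N" using Qp_root_iff[OF N nz[OF v(1)]] PQ v by simp
  qed
  have sup: "Wn N \<subseteq> f ` A"
  proof
    fix w assume w: "w \<in> Wn N"
    have "poly ?P (-1/w) = 0" using PQ Qp_root_iff[OF N Wn_nz[OF N w]] w by simp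
    then obtain v where "v \<in> A" "1 + f v * (-1/w) = 0" using prodlin_root[OF fin, of f "-1/w"] by auto
    then have "v \<in> A" "f v = w" using Wn_nz[OF N w] by (auto simp: field_simps)
    then show "w \<in> f ` A" by auto
  qed
  have im: "f ` A = Wn N" using sub sup by auto
  have "inj_on f A" using eq_card_imp_inj_on[OF fin] im cA Wn_card[OF N] by (metis card_image_le fin le_antisym eq_card_imp_inj_on) 
  then show "bij_betw f A (Wn N)" using im by (simp add: bij_betw_def)
next
  let ?P = "(\<Prod>v\<in>A. [:1, f v:])"
  assume bij: "bij_betw f A (Wn N)"
  define B where "B = insert 0 ((\<lambda>w. -1/w) ` Wn N)"
  have inj: "inj_on (\<lambda>w::complex. -1/w) (Wn N)" by (auto simp: inj_on_def)
  have "0 \<notin> (\<lambda>w. -1/w) ` Wn N" using Wn_nz[OF N] by auto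
  then have cB: "card B = N + 1" unfolding B_def using Wn_finite[OF N] card_image[OF inj] Wn_card[OF N] by simp
  show "?P = Qp N"
  proof (rule poly_eqI_degree[of B])
    fix x assume "x \<in> B"
    then consider "x = 0" | w where "w \<in> Wn N" "x = -1/w" unfolding B_def by auto
    then show "poly ?P x = poly (Qp N) x"
    proof cases
      case 1
      then show ?thesis using prodlin_basic[OF fin, of f] N by (simp add: poly_0_coeff_0 coeff_Qp)
    next
      case 2
      then obtain v where v: "v \<in> A" "f v = w" using bij 2(1) unfolding bij_betw_def by (metis imageE)
      have "1 + f v * x = 0" using v 2 Wn_nz[OF N 2(1)] by (simp add: field_simps)
      then have "poly ?P x = 0" using prodlin_root[OF fin, of f x] v by blast
      moreover have "poly (Qp N) x = 0" using Qp_root_iff[OF N Wn_nz[OF N 2(1)]] 2 by simp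
      ultimately show ?thesis by simp
    qed
  next
    show "degree ?P < card B" using prodlin_basic[OF fin, of f] cA cB by simp
  next
    show "degree (Qp N) < card B" using degree_Qp[of N] cB by simp
  qed
qed

lemma card_bij_ext:
  fixes A :: "'a set" and W :: "'b::zero set"
  assumes "finite A" "finite W" "card A = card W"
  shows "card {f. (\<forall>v. v \<notin> A \<longrightarrow> f v = 0) \<and> bij_betw f A W} = fact (card A)"
proof -
  obtain g where g: "bij_betw g W A" using finite_same_card_bij assms by metis
  define h where "h = inv_into W g"
  have h: "bij_betw h A W" unfolding h_def using g by (rule bij_betw_inv_into)
  have hg: "\<And>w. w \<in> W \<Longrightarrow> h (g w) = w" unfolding h_def using g by (simp add: bij_betw_inv_into_left)
  have gh: "\<And>a. a \<in> A \<Longrightarrow> g (h a) = a" unfolding h_def using g by (simp add: bij_betw_inv_into_right)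
  define F where "F = (\<lambda>f v. if v \<in> A then g (f v) else v)"
  define G where "G = (\<lambda>p v. if v \<in> A then h (p v) else 0)"
  have "bij_betw F {f. (\<forall>v. v \<notin> A \<longrightarrow> f v = 0) \<and> bij_betw f A W} {p. p permutes A}"
  proof (rule bij_betw_byWitness[where f' = G])
    show "\<forall>f\<in>{f. (\<forall>v. v \<notin> A \<longrightarrow> f v = 0) \<and> bij_betw f A W}. G (F f) = f"
      unfolding F_def G_def using hg by (auto simp: bij_betw_def fun_eq_iff)
    show "\<forall>p\<in>{p. p permutes A}. F (G p) = p"
      unfolding F_def G_def using gh by (auto simp: fun_eq_iff permutes_not_in permutes_in_image)
    show "F ` {f. (\<forall>v. v \<notin> A \<longrightarrow> f v = 0) \<and> bij_betw f A W} \<subseteq> {p. p permutes A}"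
    proof clarify
      fix f assume f: "\<forall>v. v \<notin> A \<longrightarrow> f v = 0" "bij_betw f A W"
      have "bij_betw (g \<circ> f) A A" using f g bij_betw_trans by blast
      then have "bij_betw (F f) A A" by (rule bij_betw_cong[THEN iffD1, rotated]) (simp add: F_def)
      then show "F f permutes A" by (rule bij_imp_permutes) (simp add: F_def)
    qed
    show "G ` {p. p permutes A} \<subseteq> {f. (\<forall>v. v \<notin> A \<longrightarrow> f v = 0) \<and> bij_betw f A W}"
    proof clarify
      fix p assume p: "p permutes A"
      have "bij_betw (h \<circ> p) A W" using permutes_imp_bij[OF p] h bij_betw_trans by blast
      then have "bij_betw (G p) A W" by (rule bij_betw_cong[THEN iffD1, rotated]) (simp add: G_def)
      then show "(\<forall>v. v \<notin> A \<longrightarrow> G p v = 0) \<and> bij_betw (G p) A W" by (simp add: G_def)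
    qed
  qed
  then have "card {f. (\<forall>v. v \<notin> A \<longrightarrow> f v = 0) \<and> bij_betw f A W} = card {p. p permutes A}"
    by (rule bij_betw_same_card)
  also have "\<dots> = fact (card A)" using card_permutations assms by blast
  finally show ?thesis .
qed

lemma Pa_props:
  "degree (Pa d n \<alpha>) \<le> dsum d n" "coeff (Pa d n \<alpha>) (dsum d n) = (\<Prod>v\<in>idx d n. \<alpha> v)"
  "coeff (Pa d n \<alpha>) 0 = 1"
  using prodlin_basic[OF idx_finite, where f=\<alpha>] unfolding Pa_def idx_card by auto

lemma Pa_scale: "coeff (Pa d n (\<lambda>v. c * \<beta> v)) k = c ^ k * coeff (Pa d n \<beta>) k"
  unfolding Pa_def by (rule prodlin_scale)

lemma sys_eq: "k \<in> {1..dsum d n} \<Longrightarrow> sys d n k (\<alpha>, z) =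
   (if k < dsum d n then coeff (Pa d n \<alpha>) k else z ^ dsum d n - coeff (Pa d n \<alpha>) (dsum d n))"
  unfolding sys_def by (simp add: hcoef_Pa Pa_props)

lemma coeff_eqI_cases:
  fixes P Q :: "complex poly"
  assumes "degree P \<le> N" "degree Q \<le> N"
    "\<And>k. k \<le> N \<Longrightarrow> coeff P k = coeff Q k"
  shows "P = Q"
proof (rule poly_eqI)
  fix k show "coeff P k = coeff Q k"
    using assms coeff_eq_0[of P k] coeff_eq_0[of Q k] by (cases "k \<le> N") auto
qed

lemma solchar:
  assumes N: "dsum d n > 0"
  shows "(\<alpha>, z) \<in> solutions d n \<longleftrightarrow> (\<forall>v. v \<notin> idx d n \<longrightarrow> \<alpha> v = 0) \<and> z \<noteq> 0
           \<and> Pa d n (\<lambda>v. \<alpha> v / z) = Qp (dsum d n)"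
    (is "?L \<longleftrightarrow> ?R")
proof
  let ?N = "dsum d n"
  let ?\<beta> = "\<lambda>v. \<alpha> v / z"
  assume L: ?L
  then have supp: "\<forall>v. v \<notin> idx d n \<longrightarrow> \<alpha> v = 0" and nz: "(\<alpha>, z) \<noteq> (\<lambda>_. 0, 0)"
    and eqs: "\<forall>k\<in>{1..?N}. sys d n k (\<alpha>, z) = 0" unfolding solutions_def by auto
  have e1: "\<And>k. 1 \<le> k \<Longrightarrow> k < ?N \<Longrightarrow> coeff (Pa d n \<alpha>) k = 0"
  proof -
    fix k assume "1 \<le> k" "k < ?N"
    then show "coeff (Pa d n \<alpha>) k = 0"
      using eqs[rule_format, of k] sys_eq[where k=k and d=d and n=n and \<alpha>=\<alpha> and z=z] by simp
  qed
  have e2: "coeff (Pa d n \<alpha>) ?N = z ^ ?N" using eqs[rule_format, of ?N] sys_eq[where k="?N" and d=d and n=n and \<alpha>=\<alpha> and z=z] N by simp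
  have z: "z \<noteq> 0"
  proof
    assume z0: "z = 0"
    have P1: "Pa d n \<alpha> = 1"
    proof (rule coeff_eqI_cases[of _ ?N])
      show "degree (Pa d n \<alpha>) \<le> ?N" by (rule Pa_props)
      show "degree (1::complex poly) \<le> ?N" by simp
      fix k assume "k \<le> ?N"
      then show "coeff (Pa d n \<alpha>) k = coeff 1 k"
        using e1[of k] e2 z0 N Pa_props(3)[of d n \<alpha>]
        by (cases "k = 0"; cases "k = ?N") (auto simp: coeff_1 power_0_left)
    qed
    have "\<alpha> v = 0" for v
    proof (cases "v \<in> idx d n")
      case True
      show ?thesis
      proof (rule ccontr)
        assume a: "\<alpha> v \<noteq> 0"
        have "1 + \<alpha> v * (-1 / \<alpha> v) = 0" using a by simp
        then have "poly (Pa d n \<alpha>) (-1 / \<alpha> v) = 0"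
          unfolding Pa_def using prodlin_root[OF idx_finite] True by blast
        then show False using P1 by simp
      qed
    qed (use supp in blast)
    then show False using nz z0 by (auto simp: fun_eq_iff)
  qed
  have sc: "coeff (Pa d n \<alpha>) k = z ^ k * coeff (Pa d n ?\<beta>) k" for k
  proof -
    have "(\<lambda>v. z * ?\<beta> v) = \<alpha>" using z by auto
    then show ?thesis using Pa_scale[where d=d and n=n and c=z and \<beta>="?\<beta>" and k=k] by simp
  qed
  have "Pa d n ?\<beta> = Qp ?N"
  proof (rule coeff_eqI_cases[of _ ?N])
    show "degree (Pa d n ?\<beta>) \<le> ?N" by (rule Pa_props)
    show "degree (Qp ?N) \<le> ?N" by (rule degree_Qp)
    fix k assume k: "k \<le> ?N"
    show "coeff (Pa d n ?\<beta>) k = coeff (Qp ?N) k"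
    proof -
      consider "k = 0" | "1 \<le> k" "k < ?N" | "k = ?N" using k by linarith
      then show ?thesis
      proof cases
        case 1 then show ?thesis using N by (simp add: Pa_props coeff_Qp)
      next
        case 2 then show ?thesis using sc[of k] e1[of k] z by (simp add: coeff_Qp)
      next
        case 3 then show ?thesis using sc[of k] e2 z N by (simp add: coeff_Qp)
      qed
    qed
  qed
  then show ?R using supp z by simp
next
  let ?N = "dsum d n"
  let ?\<beta> = "\<lambda>v. \<alpha> v / z"
  assume R: ?R
  then have supp: "\<forall>v. v \<notin> idx d n \<longrightarrow> \<alpha> v = 0" and z: "z \<noteq> 0" and PQ: "Pa d n ?\<beta> = Qp ?N"
    by auto
  have sc: "coeff (Pa d n \<alpha>) k = z ^ k * coeff (Pa d n ?\<beta>) k" for k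
  proof -
    have "(\<lambda>v. z * ?\<beta> v) = \<alpha>" using z by auto
    then show ?thesis using Pa_scale[where d=d and n=n and c=z and \<beta>="?\<beta>" and k=k] by simp
  qed
  have "\<forall>k\<in>{1..?N}. sys d n k (\<alpha>, z) = 0"
  proof
    fix k assume k: "k \<in> {1..?N}"
    show "sys d n k (\<alpha>, z) = 0" using sys_eq[where k=k and d=d and n=n and \<alpha>=\<alpha> and z=z, OF k] sc[of k] PQ k N
      by (auto simp: coeff_Qp)
  qed
  then show ?L unfolding solutions_def using supp z by auto
qed

lemma scal_iff:
  assumes "snd p \<noteq> 0" "snd q \<noteq> 0"
  shows "(\<exists>c::complex. c \<noteq> 0 \<and> q = ((\<lambda>v. c * fst p v), c * snd p)) \<longleftrightarrow>
         (\<lambda>v. fst q v / snd q) = (\<lambda>v. fst p v / snd p)"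
proof
  assume "\<exists>c::complex. c \<noteq> 0 \<and> q = ((\<lambda>v. c * fst p v), c * snd p)"
  then obtain c where "c \<noteq> 0" "q = ((\<lambda>v. c * fst p v), c * snd p)" by blast
  then show "(\<lambda>v. fst q v / snd q) = (\<lambda>v. fst p v / snd p)" by auto
next
  assume e: "(\<lambda>v. fst q v / snd q) = (\<lambda>v. fst p v / snd p)"
  define c where "c = snd q / snd p"
  have "c \<noteq> 0" using assms unfolding c_def by simp
  moreover have "q = ((\<lambda>v. c * fst p v), c * snd p)"
  proof -
    have "fst q v = c * fst p v" for v
      using fun_cong[OF e, of v] assms unfolding c_def by (auto simp: field_simps)
    moreover have "snd q = c * snd p" using assms unfolding c_def by simp
    ultimately show ?thesis by (metis prod.collapse ext)
  qed
  ultimately show "\<exists>c::complex. c \<noteq> 0 \<and> q = ((\<lambda>v. c * fst p v), c * snd p)" by blast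
qed

lemma sol_snd_nz: "p \<in> solutions d n \<Longrightarrow> dsum d n > 0 \<Longrightarrow> snd p \<noteq> 0"
  using solchar[of d n "fst p" "snd p"] by simp

lemma card_part_pos:
  assumes N: "dsum d n > 0"
  shows "card (solutions d n // proj_equiv d n) = fact (dsum d n)"
proof -
  let ?N = "dsum d n"
  let ?I = "idx d n"
  define S where "S = {\<beta>. (\<forall>v. v \<notin> ?I \<longrightarrow> \<beta> v = 0) \<and> Pa d n \<beta> = Qp ?N}"
  define \<phi> where "\<phi> = (\<lambda>p::hpoint. (\<lambda>v. fst p v / snd p))"
  define fib where "fib = (\<lambda>\<beta>. {q \<in> solutions d n. \<phi> q = \<beta>})"
  have S_eq: "S = {\<beta>. (\<forall>v. v \<notin> ?I \<longrightarrow> \<beta> v = 0) \<and> bij_betw \<beta> ?I (Wn ?N)}"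
    unfolding S_def
  proof (rule Collect_cong)
    fix \<beta> show "((\<forall>v. v \<notin> ?I \<longrightarrow> \<beta> v = 0) \<and> Pa d n \<beta> = Qp ?N) =
       ((\<forall>v. v \<notin> ?I \<longrightarrow> \<beta> v = 0) \<and> bij_betw \<beta> ?I (Wn ?N))"
      unfolding Pa_def using S1char[OF idx_finite idx_card N, where f=\<beta>] by simp
  qed
  have cS: "card S = fact ?N"
  proof -
    have "card S = fact (card ?I)" unfolding S_eq
      by (rule card_bij_ext[OF idx_finite Wn_finite[OF N]]) (simp add: idx_card Wn_card[OF N])
    then show ?thesis by (simp add: idx_card)
  qed
  have sol: "p \<in> solutions d n \<longleftrightarrow> (\<forall>v. v \<notin> ?I \<longrightarrow> fst p v = 0) \<and> snd p \<noteq> 0 \<and> \<phi> p \<in> S" for p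
  proof -
    have "p \<in> solutions d n \<longleftrightarrow> (fst p, snd p) \<in> solutions d n" by simp
    also have "\<dots> \<longleftrightarrow> (\<forall>v. v \<notin> ?I \<longrightarrow> fst p v = 0) \<and> snd p \<noteq> 0 \<and> Pa d n (\<phi> p) = Qp ?N"
      unfolding \<phi>_def by (rule solchar[OF N])
    also have "\<dots> \<longleftrightarrow> (\<forall>v. v \<notin> ?I \<longrightarrow> fst p v = 0) \<and> snd p \<noteq> 0 \<and> \<phi> p \<in> S"
      unfolding S_def \<phi>_def by auto
    finally show ?thesis .
  qed
  have cls: "proj_equiv d n `` {p} = fib (\<phi> p)" if p: "p \<in> solutions d n" for p
  proof -
    have "q \<in> proj_equiv d n `` {p} \<longleftrightarrow> q \<in> fib (\<phi> p)" for q
    proof (cases "q \<in> solutions d n")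
      case True
      then show ?thesis unfolding proj_equiv_def fib_def \<phi>_def
        using scal_iff[OF sol_snd_nz[OF p N] sol_snd_nz[OF True N]] p by auto
    qed (auto simp: proj_equiv_def fib_def)
    then show ?thesis by blast
  qed
  have b1: "(\<beta>, 1) \<in> solutions d n" and b2: "\<phi> (\<beta>, 1) = \<beta>" if "\<beta> \<in> S" for \<beta>
    using that sol[of "(\<beta>, 1)"] unfolding S_def \<phi>_def by auto
  have Q: "solutions d n // proj_equiv d n = fib ` S"
  proof
    show "solutions d n // proj_equiv d n \<subseteq> fib ` S"
      unfolding quotient_def using cls sol by auto
    show "fib ` S \<subseteq> solutions d n // proj_equiv d n"
    proof
      fix X assume "X \<in> fib ` S"
      then obtain \<beta> where "\<beta> \<in> S" "X = fib \<beta>" by auto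
      then show "X \<in> solutions d n // proj_equiv d n"
        unfolding quotient_def using cls[OF b1] b1 b2 by force
    qed
  qed
  have "inj_on fib S"
  proof (rule inj_onI)
    fix \<beta> \<gamma> assume "\<beta> \<in> S" "\<gamma> \<in> S" "fib \<beta> = fib \<gamma>"
    then have "(\<beta>, 1) \<in> fib \<gamma>" using b1 b2 unfolding fib_def by blast
    then show "\<beta> = \<gamma>" using b2 \<open>\<beta> \<in> S\<close> unfolding fib_def by auto
  qed
  then show ?thesis using Q cS card_image by metis
qed

lemma card_part_zero:
  assumes N: "dsum d n = 0"
  shows "card (solutions d n // proj_equiv d n) = fact (dsum d n)"
proof -
  have I: "idx d n = {}" using idx_card[of d n] idx_finite[of d n] N by simp
  have sol: "solutions d n = {p. fst p = (\<lambda>_. 0) \<and> snd p \<noteq> 0}"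
    unfolding solutions_def using I N by (auto simp: fun_eq_iff)
  have cls: "proj_equiv d n `` {p} = solutions d n" if p: "p \<in> solutions d n" for p
  proof -
    have "q \<in> proj_equiv d n `` {p}" if q: "q \<in> solutions d n" for q
    proof -
      have "(\<lambda>v. fst q v / snd q) = (\<lambda>v. fst p v / snd p)" using p q sol by auto
      then show ?thesis unfolding proj_equiv_def using scal_iff[of p q] p q sol by auto
    qed
    then show ?thesis unfolding proj_equiv_def by auto
  qed
  have "(\<lambda>_. 0, 1) \<in> solutions d n" using sol by simp
  then have "solutions d n // proj_equiv d n = {solutions d n}"
    unfolding quotient_def using cls by auto
  then show ?thesis using N by simp
qed

lemma Pa_upd:
  assumes v: "v \<in> idx d n"
  shows "Pa d n (\<alpha>(v := s)) = [:1, s:] * (\<Prod>w\<in>idx d n - {v}. [:1, \<alpha> w:])"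
proof -
  have "Pa d n (\<alpha>(v := s)) = [:1, s:] * (\<Prod>w\<in>idx d n - {v}. [:1, (\<alpha>(v := s)) w:])"
    unfolding Pa_def by (subst prod.remove[OF idx_finite v]) (simp only: fun_upd_same)
  also have "(\<Prod>w\<in>idx d n - {v}. [:1, (\<alpha>(v := s)) w:]) = (\<Prod>w\<in>idx d n - {v}. [:1, \<alpha> w:])"
    by (rule prod.cong) auto
  finally show ?thesis .
qed

lemma prod_upd:
  assumes v: "v \<in> idx d n"
  shows "(\<Prod>w\<in>idx d n. (\<alpha>(v := s)) w) = s * (\<Prod>w\<in>idx d n - {v}. \<alpha> w)"
proof -
  have "(\<Prod>w\<in>idx d n. (\<alpha>(v := s)) w) = s * (\<Prod>w\<in>idx d n - {v}. (\<alpha>(v := s)) w)"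
    by (subst prod.remove[OF idx_finite v]) (simp only: fun_upd_same)
  also have "(\<Prod>w\<in>idx d n - {v}. (\<alpha>(v := s)) w) = (\<Prod>w\<in>idx d n - {v}. \<alpha> w)"
    by (rule prod.cong) auto
  finally show ?thesis .
qed

lemma pd_alpha_lt:
  assumes v: "v \<in> idx d n" and k: "1 \<le> k" "k < dsum d n"
  shows "pd_alpha (sys d n k) (\<alpha>, z) v = coeff (\<Prod>w\<in>idx d n - {v}. [:1, \<alpha> w:]) (k - 1)"
proof -
  let ?R = "\<Prod>w\<in>idx d n - {v}. [:1, \<alpha> w:]"
  have "(\<lambda>s. sys d n k (\<alpha>(v := s), z)) = (\<lambda>s. coeff ?R k + s * coeff ?R (k - 1))"
  proof
    fix s
    have kk: "k = Suc (k - 1)" using k by simp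
    have "sys d n k (\<alpha>(v := s), z) = coeff (Pa d n (\<alpha>(v := s))) k"
      using k by (simp add: sys_def hcoef_Pa)
    also have "\<dots> = coeff ?R k + s * coeff ?R (k - 1)"
      unfolding Pa_upd[OF v] using coeff_lin_mult_Suc[of s ?R "k-1"] kk by simp
    finally show "sys d n k (\<alpha>(v := s), z) = coeff ?R k + s * coeff ?R (k - 1)" .
  qed
  moreover have "((\<lambda>s. coeff ?R k + s * coeff ?R (k - 1)) has_field_derivative coeff ?R (k - 1)) (at x)" for x
    by (auto intro!: derivative_eq_intros)
  ultimately show ?thesis unfolding pd_alpha_def by (simp add: DERIV_imp_deriv)
qed

lemma pd_alpha_N:
  assumes v: "v \<in> idx d n"
  shows "pd_alpha (sys d n (dsum d n)) (\<alpha>, z) v = - (\<Prod>w\<in>idx d n - {v}. \<alpha> w)"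
proof -
  let ?r = "\<Prod>w\<in>idx d n - {v}. \<alpha> w"
  have "(\<lambda>s. sys d n (dsum d n) (\<alpha>(v := s), z)) = (\<lambda>s. z ^ dsum d n - s * ?r)"
    by (rule ext) (simp add: sys_def prod_upd[OF v] del: fun_upd_apply)
  moreover have "((\<lambda>s. z ^ dsum d n - s * ?r) has_field_derivative - ?r) (at x)" for x
    by (auto intro!: derivative_eq_intros)
  ultimately show ?thesis unfolding pd_alpha_def by (simp add: DERIV_imp_deriv)
qed

lemma pd_z_lt:
  assumes "k < dsum d n"
  shows "pd_z (sys d n k) (\<alpha>, z) = 0"
proof -
  have "(\<lambda>s. sys d n k (\<alpha>, s)) = (\<lambda>s. hcoef d n k \<alpha>)"
    using assms by (simp add: sys_def)
  then show ?thesis unfolding pd_z_def by simp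
qed

lemma pd_z_N:
  shows "pd_z (sys d n (dsum d n)) (\<alpha>, z) = of_nat (dsum d n) * z ^ (dsum d n - 1)"
proof -
  let ?N = "dsum d n"
  have "(\<lambda>s. sys d n ?N (\<alpha>, s)) = (\<lambda>s. s ^ ?N - (\<Prod>v\<in>idx d n. \<alpha> v))"
    by (simp add: sys_def)
  moreover have "((\<lambda>s. s ^ ?N - (\<Prod>v\<in>idx d n. \<alpha> v)) has_field_derivative of_nat ?N * z ^ (?N - 1)) (at z)"
    by (auto intro!: derivative_eq_intros)
  ultimately show ?thesis unfolding pd_z_def by (simp add: DERIV_imp_deriv)
qed

lemma R_coeff:
  assumes v: "v \<in> idx d n"
    and e1: "\<And>k. 1 \<le> k \<Longrightarrow> k < dsum d n \<Longrightarrow> coeff (Pa d n \<alpha>) k = 0"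
    and j: "j < dsum d n"
  shows "coeff (\<Prod>w\<in>idx d n - {v}. [:1, \<alpha> w:]) j = (- \<alpha> v) ^ j"
  using j
proof (induction j)
  case 0
  show ?case using prodlin_basic[of "idx d n - {v}" \<alpha>] idx_finite[of d n] by simp
next
  case (Suc j)
  let ?R = "\<Prod>w\<in>idx d n - {v}. [:1, \<alpha> w:]"
  have "Pa d n \<alpha> = [:1, \<alpha> v:] * ?R" using Pa_upd[OF v, of \<alpha> "\<alpha> v"] by simp
  then have "0 = coeff ?R (Suc j) + \<alpha> v * coeff ?R j"
    using e1[of "Suc j"] Suc.prems coeff_lin_mult_Suc[of "\<alpha> v" ?R j] by simp
  then show ?case using Suc by (simp add: add_eq_0_iff2)
qed

lemma simple_pos:
  assumes N: "dsum d n > 0" and p: "(\<alpha>, z) \<in> solutions d n"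
  shows "simple_solution d n (\<alpha>, z)"
  unfolding simple_solution_def
proof (intro allI impI)
  let ?N = "dsum d n"
  let ?I = "idx d n"
  fix c :: "nat \<Rightarrow> complex"
  assume H: "(\<forall>v\<in>?I. (\<Sum>k\<in>{1..?N}. c k * pd_alpha (sys d n k) (\<alpha>, z) v) = 0) \<and>
         (\<Sum>k\<in>{1..?N}. c k * pd_z (sys d n k) (\<alpha>, z)) = 0"
  have sc: "(\<forall>v. v \<notin> ?I \<longrightarrow> \<alpha> v = 0) \<and> z \<noteq> 0 \<and> Pa d n (\<lambda>v. \<alpha> v / z) = Qp ?N"
    using solchar[OF N] p by blast
  then have z: "z \<noteq> 0" by blast
  have "bij_betw (\<lambda>v. \<alpha> v / z) ?I (Wn ?N)"
    using sc S1char[OF idx_finite idx_card N, where f="\<lambda>v. \<alpha> v / z"] unfolding Pa_def by blast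
  then have inj: "inj_on (\<lambda>v. - \<alpha> v) ?I" using z unfolding bij_betw_def inj_on_def by auto
  have e1: "\<And>k. 1 \<le> k \<Longrightarrow> k < ?N \<Longrightarrow> coeff (Pa d n \<alpha>) k = 0"
  proof -
    fix k assume k: "1 \<le> k" "k < ?N"
    then have "sys d n k (\<alpha>, z) = 0" using p unfolding solutions_def by auto
    then show "coeff (Pa d n \<alpha>) k = 0" using k by (simp add: sys_def hcoef_Pa)
  qed
  have "(\<Sum>k\<in>{1..?N}. c k * pd_z (sys d n k) (\<alpha>, z)) =
        (\<Sum>k\<in>{1..?N}. if k = ?N then c ?N * (of_nat ?N * z ^ (?N - 1)) else 0)"
    by (rule sum.cong) (auto simp: pd_z_lt pd_z_N)
  also have "\<dots> = c ?N * (of_nat ?N * z ^ (?N - 1))" using N by simp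
  finally have cN: "c ?N = 0" using H z N by simp
  define C where "C = (\<Sum>k\<in>{1..?N}. monom (c k) (k - 1))"
  have polyC: "poly C x = (\<Sum>k\<in>{1..?N}. c k * x ^ (k - 1))" for x
    unfolding C_def by (simp add: poly_sum poly_monom)
  have degC: "degree C < ?N"
  proof -
    have "degree C \<le> ?N - 1" unfolding C_def
      by (rule degree_sum_le) (auto intro: order.trans[OF degree_monom_le])
    then show ?thesis using N by linarith
  qed
  have roots: "poly C x = poly 0 x" if "x \<in> (\<lambda>v. - \<alpha> v) ` ?I" for x
  proof -
    obtain v where v: "v \<in> ?I" "x = - \<alpha> v" using \<open>x \<in> _\<close> by auto
    have "(\<Sum>k\<in>{1..?N}. c k * pd_alpha (sys d n k) (\<alpha>, z) v) = (\<Sum>k\<in>{1..?N}. c k * x ^ (k - 1))"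
    proof (rule sum.cong)
      fix k assume k: "k \<in> {1..?N}"
      show "c k * pd_alpha (sys d n k) (\<alpha>, z) v = c k * x ^ (k - 1)"
      proof (cases "k = ?N")
        case True then show ?thesis using cN by simp
      next
        case False
        then have "k < ?N" "1 \<le> k" using k by auto
        then show ?thesis using pd_alpha_lt[OF v(1)] R_coeff[OF v(1) e1] v(2) by simp
      qed
    qed simp
    then show ?thesis using H v polyC by simp
  qed
  have C0: "C = 0"
    by (rule poly_eqI_degree[OF roots]) (use degC card_image[OF inj] idx_card[of d n] in auto)
  show "\<forall>k\<in>{1..?N}. c k = 0"
  proof
    fix k assume k: "k \<in> {1..?N}"
    have "coeff C (k - 1) = (\<Sum>k'\<in>{1..?N}. if k' = k then c k' else 0)"
      unfolding C_def coeff_sum by (rule sum.cong) (use k in \<open>auto simp: coeff_monom\<close>)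
    also have "\<dots> = c k" using k by simp
    finally show "c k = 0" using C0 by simp
  qed
qed

theorem lemma3p5:
  fixes d :: "nat \<Rightarrow> nat" and n :: nat
  assumes "\<forall>i<n. 0 < d i"
  shows "card (solutions d n // proj_equiv d n) = fact (dsum d n)
         \<and> (\<forall>p\<in>solutions d n. simple_solution d n p)"
proof
  show "card (solutions d n // proj_equiv d n) = fact (dsum d n)"
    using card_part_pos card_part_zero by blast
  show "\<forall>p\<in>solutions d n. simple_solution d n p"
  proof
    fix p assume p: "p \<in> solutions d n"
    show "simple_solution d n p"
    proof (cases "dsum d n = 0")
      case True
      then show ?thesis unfolding simple_solution_def by simp
    next
      case False
      then show ?thesis using simple_pos[of d n "fst p" "snd p"] p by simp
    qed
  qed
qed

end
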